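(* Let $S_1,\dots,S_N$ be pairwise disjoint finite sets of variables, $S=\bigcup_iS_i$, and $\mu\in\mathcal{D}(\mathrm{Mem}[S])$. Then $S_1,\dots,S_N$ are mutually independent in $\mu$, i.e. $\mu(x)=\prod_{i=1}^N\pi_{S_i}\mu(p_{S_i}x)$ for all $x\in\mathrm{Mem}[S]$, if and only if for every family of functions $f_i:\mathrm{Mem}[S_i]\to[0,\infty)$ ($1\le i\le N$) that are all monotone or all antitone, $\mathbb{E}_{x\sim\mu}[\prod_{i}f_i(p_{S_i}x)]=\prod_i\mathbb{E}_{x\sim\mu}[f_i(p_{S_i}x)]$.
   Context: Values are real numbers; for finite $S$, $\mathrm{Mem}[S]$ is the set of maps $S\to\mathbb{R}$ with the pointwise order; $p_A$ denotes restriction to $A$; $\mathcal{D}(\cdot)$ denotes countably supported probability distributions; $\pi_A\mu$ is the marginal of $\mu$ on $A$. Monotone means non-decreasing and antitone means non-increasing in the pointwise order. *)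

theory Defs
  imports "HOL-Probability.Probability"
begin

text \<open>Memories over a finite set of variables S: maps S -> real, represented
  extensionally (value undefined outside S).\<close>
definition Mem :: "'v set \<Rightarrow> ('v \<Rightarrow> real) set" where
  "Mem S = S \<rightarrow>\<^sub>E (UNIV :: real set)"

definition proj :: "'v set \<Rightarrow> ('v \<Rightarrow> real) \<Rightarrow> ('v \<Rightarrow> real)" where
  "proj A x = restrict x A"

definition marginal :: "'v set \<Rightarrow> ('v \<Rightarrow> real) pmf \<Rightarrow> ('v \<Rightarrow> real) pmf" where
  "marginal A \<mu> = map_pmf (proj A) \<mu>"

definition mem_le :: "'v set \<Rightarrow> ('v \<Rightarrow> real) \<Rightarrow> ('v \<Rightarrow> real) \<Rightarrow> bool" where
  "mem_le S m m' \<longleftrightarrow> (\<forall>v\<in>S. m v \<le> m' v)"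

definition monotone_mem :: "'v set \<Rightarrow> (('v \<Rightarrow> real) \<Rightarrow> real) \<Rightarrow> bool" where
  "monotone_mem S f \<longleftrightarrow> (\<forall>m\<in>Mem S. \<forall>m'\<in>Mem S. mem_le S m m' \<longrightarrow> f m \<le> f m')"

definition antitone_mem :: "'v set \<Rightarrow> (('v \<Rightarrow> real) \<Rightarrow> real) \<Rightarrow> bool" where
  "antitone_mem S f \<longleftrightarrow> (\<forall>m\<in>Mem S. \<forall>m'\<in>Mem S. mem_le S m m' \<longrightarrow> f m' \<le> f m)"

definition mutually_independent :: "nat \<Rightarrow> (nat \<Rightarrow> 'v set) \<Rightarrow> ('v \<Rightarrow> real) pmf \<Rightarrow> bool" where
  "mutually_independent N Ss \<mu> \<longleftrightarrow>
     (\<forall>x\<in>Mem (\<Union>i<N. Ss i).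
        pmf \<mu> x = (\<Prod>i<N. pmf (marginal (Ss i) \<mu>) (proj (Ss i) x)))"

end

theory Submission
  imports Defs
begin

lemma proj_Mem[simp]: "proj A x \<in> Mem A"
  unfolding proj_def Mem_def by simp

lemma Mem_eq:
  assumes "x \<in> Mem (\<Union>i<N. Ss i)" "y \<in> Mem (\<Union>i<N. Ss i)"
    "\<forall>i<N. proj (Ss i) x = proj (Ss i) y"
  shows "x = y"
proof (rule ext)
  fix v show "x v = y v"
  proof (cases "\<exists>i<N. v \<in> Ss i")
    case True then obtain i where "i<N" "v \<in> Ss i" by blast
    with assms(3) have "restrict x (Ss i) v = restrict y (Ss i) v" unfolding proj_def by metis
    with \<open>v \<in> Ss i\<close> show ?thesis by simp
  next
    case False then show ?thesis using assms(1,2) unfolding Mem_def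
      by (auto simp: PiE_def extensional_def)
  qed
qed

lemma mem_le_antisym:
  assumes "m \<in> Mem S" "m' \<in> Mem S" "mem_le S m m'" "mem_le S m' m"
  shows "m = m'"
proof (rule ext)
  fix v show "m v = m' v"
  proof (cases "v \<in> S")
    case True then show ?thesis using assms(3,4) unfolding mem_le_def by force
  next
    case False then show ?thesis using assms(1,2) unfolding Mem_def
      by (auto simp: PiE_def extensional_def)
  qed
qed

definition upcl :: "'v set \<Rightarrow> ('v\<Rightarrow>real) set \<Rightarrow> bool" where
  "upcl S A \<longleftrightarrow> (\<forall>m\<in>A. \<forall>m'\<in>Mem S. mem_le S m m' \<longrightarrow> m' \<in> A)"

lemma prod_indic:
  fixes N :: nat
  shows
  "(\<Prod>i<N. indicator (A i) (g i x) :: real) = indicator {x. \<forall>i<N. g i x \<in> A i} x"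
proof (cases "\<forall>i<N. g i x \<in> A i")
  case True then show ?thesis by (simp add: indicator_def)
next
  case False
  then obtain i where i: "i<N" "g i x \<notin> A i" by blast
  have "(\<Prod>i<N. indicator (A i) (g i x) :: real) = 0"
    by (rule prod_zero) (use i in \<open>auto intro!: bexI[where x=i] simp: indicator_def\<close>)
  then show ?thesis using False by (auto simp: indicator_def)
qed

lemma up_case:
  fixes \<mu> :: "('v\<Rightarrow>real) pmf" and N :: nat
  assumes H: "\<forall>f :: nat \<Rightarrow> ('v \<Rightarrow> real) \<Rightarrow> real.
       (\<forall>i<N. \<forall>m\<in>Mem (Ss i). 0 \<le> f i m) \<longrightarrow>
       ((\<forall>i<N. monotone_mem (Ss i) (f i)) \<or> (\<forall>i<N. antitone_mem (Ss i) (f i))) \<longrightarrow>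
       (\<integral>\<^sup>+ x. ennreal (\<Prod>i<N. f i (proj (Ss i) x)) \<partial>measure_pmf \<mu>) =
       (\<Prod>i<N. \<integral>\<^sup>+ x. ennreal (f i (proj (Ss i) x)) \<partial>measure_pmf \<mu>)"
  and up: "\<forall>i<N. upcl (Ss i) (A i)"
  shows "measure \<mu> {x. \<forall>i<N. proj (Ss i) x \<in> A i} = (\<Prod>i<N. measure \<mu> {x. proj (Ss i) x \<in> A i})"
proof -
  define f where "f = (\<lambda>i m. indicator (A i) m :: real)"
  have mono: "\<forall>i<N. monotone_mem (Ss i) (f i)"
    using up unfolding f_def monotone_mem_def upcl_def by (auto simp: indicator_def)
  have nn: "\<forall>i<N. \<forall>m\<in>Mem (Ss i). 0 \<le> f i m" unfolding f_def by simp
  have eq: "(\<integral>\<^sup>+ x. ennreal (\<Prod>i<N. f i (proj (Ss i) x)) \<partial>measure_pmf \<mu>) =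
       (\<Prod>i<N. \<integral>\<^sup>+ x. ennreal (f i (proj (Ss i) x)) \<partial>measure_pmf \<mu>)"
    using H mono nn by blast
  have l: "(\<integral>\<^sup>+ x. ennreal (\<Prod>i<N. f i (proj (Ss i) x)) \<partial>measure_pmf \<mu>)
      = ennreal (measure \<mu> {x. \<forall>i<N. proj (Ss i) x \<in> A i})"
  proof -
    have "\<And>x. ennreal (\<Prod>i<N. f i (proj (Ss i) x)) = indicator {x. \<forall>i<N. proj (Ss i) x \<in> A i} x"
      unfolding f_def using prod_indic[where N=N and A=A and g="\<lambda>i x. proj (Ss i) x"] by (simp add: ennreal_indicator)
    then show ?thesis by (simp add: measure_pmf.emeasure_eq_measure)
  qed
  have r: "\<And>i. (\<integral>\<^sup>+ x. ennreal (f i (proj (Ss i) x)) \<partial>measure_pmf \<mu>)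
      = ennreal (measure \<mu> {x. proj (Ss i) x \<in> A i})"
  proof -
    fix i
    have "(\<lambda>x. ennreal (f i (proj (Ss i) x))) = indicator {x. proj (Ss i) x \<in> A i}"
      unfolding f_def by (auto simp: indicator_def)
    then show "?thesis i" by (simp add: measure_pmf.emeasure_eq_measure)
  qed
  have "ennreal (measure \<mu> {x. \<forall>i<N. proj (Ss i) x \<in> A i})
     = ennreal (\<Prod>i<N. measure \<mu> {x. proj (Ss i) x \<in> A i})"
    using eq unfolding l r by (simp add: prod_ennreal)
  then show ?thesis by (simp add: prod_nonneg)
qed

lemma sing_case:
  fixes \<mu> :: "('v\<Rightarrow>real) pmf" and N k :: nat and Ss :: "nat \<Rightarrow> 'v set"
  assumes UP: "\<And>A. (\<forall>i<N. upcl (Ss i) (A i)) \<Longrightarrow>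
     measure \<mu> {x. \<forall>i<N. proj (Ss i) x \<in> A i} = (\<Prod>i<N. measure \<mu> {x. proj (Ss i) x \<in> A i})"
  shows "k \<le> N \<Longrightarrow> (\<forall>i<k. A i = {a i} \<and> a i \<in> Mem (Ss i)) \<Longrightarrow>
    (\<forall>i. k \<le> i \<and> i < N \<longrightarrow> upcl (Ss i) (A i)) \<Longrightarrow>
    measure \<mu> {x. \<forall>i<N. proj (Ss i) x \<in> A i} = (\<Prod>i<N. measure \<mu> {x. proj (Ss i) x \<in> A i})"
proof (induction k arbitrary: A)
  case 0 then show ?case using UP by auto
next
  case (Suc k)
  let ?c = "\<lambda>i W. measure \<mu> {x. proj (Ss i) x \<in> W}"
  let ?E = "\<lambda>B. {x. \<forall>i<N. proj (Ss i) x \<in> B i}"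
  define U where "U = {m \<in> Mem (Ss k). mem_le (Ss k) (a k) m}"
  define V where "V = U - {a k}"
  have kN: "k < N" using Suc by simp
  have ak: "A k = {a k}" "a k \<in> Mem (Ss k)" using Suc.prems by auto
  have akU: "a k \<in> U" unfolding U_def mem_le_def using ak by auto
  have upU: "upcl (Ss k) U" unfolding upcl_def U_def mem_le_def by (auto intro: order_trans)
  have upV: "upcl (Ss k) V" unfolding upcl_def
  proof (intro ballI impI)
    fix m m' assume m: "m \<in> V" "m' \<in> Mem (Ss k)" "mem_le (Ss k) m m'"
    then have "m' \<in> U" using upU unfolding upcl_def V_def by blast
    moreover have "m' \<noteq> a k"
    proof
      assume "m' = a k"
      then have "m = a k" using m mem_le_antisym[of m "Ss k" "a k"] unfolding V_def U_def by auto
      then show False using m(1) unfolding V_def by auto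
    qed
    ultimately show "m' \<in> V" unfolding V_def by auto
  qed
  have IH1: "measure \<mu> (?E (A(k:=U))) = (\<Prod>i<N. ?c i ((A(k:=U)) i))"
    by (rule Suc.IH) (use Suc.prems upU in auto)
  have IH2: "measure \<mu> (?E (A(k:=V))) = (\<Prod>i<N. ?c i ((A(k:=V)) i))"
    by (rule Suc.IH) (use Suc.prems upV in auto)
  have memE: "\<And>B x. x \<in> ?E B \<longleftrightarrow> (\<forall>i<N. i \<noteq> k \<longrightarrow> proj (Ss i) x \<in> B i) \<and> proj (Ss k) x \<in> B k"
    using kN by auto
  have sets: "?E A = ?E (A(k:=U)) - ?E (A(k:=V))"
  proof (rule set_eqI)
    fix x show "x \<in> ?E A \<longleftrightarrow> x \<in> ?E (A(k:=U)) - ?E (A(k:=V))"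
      unfolding Diff_iff memE using ak akU by (auto simp: V_def)
  qed
  have sub: "?E (A(k:=V)) \<subseteq> ?E (A(k:=U))" unfolding V_def by auto
  have cset: "{x. proj (Ss k) x \<in> A k} = {x. proj (Ss k) x \<in> U} - {x. proj (Ss k) x \<in> V}"
    using ak akU by (auto simp: V_def)
  have prodsplit: "\<And>W. (\<Prod>i<N. ?c i ((A(k:=W)) i)) = ?c k W * (\<Prod>i\<in>{..<N}-{k}. ?c i (A i))"
  proof -
    fix W
    have "(\<Prod>i<N. ?c i ((A(k:=W)) i)) = ?c k ((A(k:=W)) k) * (\<Prod>i\<in>{..<N}-{k}. ?c i ((A(k:=W)) i))"
      by (subst prod.remove[of "{..<N}" k]) (use kN in auto)
    also have "(\<Prod>i\<in>{..<N}-{k}. ?c i ((A(k:=W)) i)) = (\<Prod>i\<in>{..<N}-{k}. ?c i (A i))"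
      by (rule prod.cong) auto
    finally show "(\<Prod>i<N. ?c i ((A(k:=W)) i)) = ?c k W * (\<Prod>i\<in>{..<N}-{k}. ?c i (A i))" by simp
  qed
  have "measure \<mu> (?E A) = measure \<mu> (?E (A(k:=U))) - measure \<mu> (?E (A(k:=V)))"
    unfolding sets using sub by (simp add: measure_pmf.finite_measure_Diff)
  also have "\<dots> = (?c k U - ?c k V) * (\<Prod>i\<in>{..<N}-{k}. ?c i (A i))"
    unfolding IH1 IH2 prodsplit by (simp add: algebra_simps)
  also have "?c k U - ?c k V = ?c k (A k)"
    unfolding cset by (rule sym, rule measure_pmf.finite_measure_Diff) (auto simp: V_def)
  also have "?c k (A k) * (\<Prod>i\<in>{..<N}-{k}. ?c i (A i)) = (\<Prod>i<N. ?c i ((A(k:=A k)) i))"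
    by (rule prodsplit[symmetric])
  finally show ?case by simp
qed

lemma fwd:
  fixes \<mu> :: "('v\<Rightarrow>real) pmf"
  assumes disj: "\<And>i j. i < N \<Longrightarrow> j < N \<Longrightarrow> i \<noteq> j \<Longrightarrow> Ss i \<inter> Ss j = {}"
    and supp: "set_pmf \<mu> \<subseteq> Mem (\<Union>i<N. Ss i)"
    and ind: "mutually_independent N Ss \<mu>"
    and P_def: "P = (\<lambda>x i. if i < N then proj (Ss i) x else undefined)"
  shows "map_pmf P \<mu>
       = Pi_pmf {..<N} undefined (\<lambda>i. marginal (Ss i) \<mu>)"
proof (rule pmf_eqI)
  fix g :: "nat \<Rightarrow> 'v \<Rightarrow> real"
  show "pmf (map_pmf P \<mu>) g
      = pmf (Pi_pmf {..<N} undefined (\<lambda>i. marginal (Ss i) \<mu>)) g"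
  proof (cases "\<forall>i. i \<notin> {..<N} \<longrightarrow> g i = undefined")
    case False
    then have "P -` {g} = {}" by (auto simp: P_def)
    then have "pmf (map_pmf P \<mu>) g = 0" by (simp add: pmf_map)
    moreover have "pmf (Pi_pmf {..<N} undefined (\<lambda>i. marginal (Ss i) \<mu>)) g = 0"
      using False by (subst pmf_Pi) auto
    ultimately show ?thesis by simp
  next
    case gdef: True
    have pi: "pmf (Pi_pmf {..<N} undefined (\<lambda>i. marginal (Ss i) \<mu>)) g
        = (\<Prod>i<N. pmf (marginal (Ss i) \<mu>) (g i))" using gdef by (simp add: pmf_Pi)
    show ?thesis
    proof (cases "\<exists>x\<in>set_pmf \<mu>. P x = g")
      case True
      then obtain x where x: "x \<in> set_pmf \<mu>" "P x = g" by blast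
      have xM: "x \<in> Mem (\<Union>i<N. Ss i)" using x supp by auto
      have "P -` {g} \<inter> set_pmf \<mu> = {x} \<inter> set_pmf \<mu>"
      proof (intro set_eqI iffI)
        fix y assume y: "y \<in> P -` {g} \<inter> set_pmf \<mu>"
        then have Pyx: "P y = P x" using x(2) by auto
        have "\<forall>i<N. proj (Ss i) y = proj (Ss i) x"
        proof (intro allI impI)
          fix i assume "i < N"
          then show "proj (Ss i) y = proj (Ss i) x"
            using fun_cong[OF Pyx, of i] by (simp add: P_def)
        qed
        then have "y = x" using Mem_eq[where x=y and y=x and N=N and Ss=Ss] y supp xM by auto
        then show "y \<in> {x} \<inter> set_pmf \<mu>" using y by auto
      qed (use x in auto)
      then have "measure \<mu> (P -` {g}) = measure \<mu> {x}"
        by (metis measure_Int_set_pmf)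
      also have "\<dots> = pmf \<mu> x" by (simp add: measure_pmf_single)
      also have "\<dots> = (\<Prod>i<N. pmf (marginal (Ss i) \<mu>) (proj (Ss i) x))"
        using ind xM unfolding mutually_independent_def by blast
      also have "\<dots> = (\<Prod>i<N. pmf (marginal (Ss i) \<mu>) (g i))"
        using x(2) unfolding P_def by (intro prod.cong) auto
      finally show ?thesis using pi by (simp add: pmf_map)
    next
      case False
      have "set_pmf \<mu> \<inter> P -` {g} = {}" using False by blast
      then have z: "measure \<mu> (P -` {g}) = 0" by (simp add: measure_pmf_zero_iff)
      have "(\<Prod>i<N. pmf (marginal (Ss i) \<mu>) (g i)) = 0"
      proof (rule ccontr)
        assume nz: "(\<Prod>i<N. pmf (marginal (Ss i) \<mu>) (g i)) \<noteq> 0"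
        have "\<forall>i<N. g i \<in> proj (Ss i) ` set_pmf \<mu>"
        proof (intro allI impI)
          fix i assume i: "i < N"
          have "pmf (marginal (Ss i) \<mu>) (g i) \<noteq> 0"
            using nz i by (metis finite_lessThan lessThan_iff prod_zero)
          then have "g i \<in> set_pmf (marginal (Ss i) \<mu>)" by (simp add: set_pmf_iff)
          then show "g i \<in> proj (Ss i) ` set_pmf \<mu>" by (simp add: marginal_def)
        qed
        then have "\<forall>i\<in>{..<N}. \<exists>z. z \<in> set_pmf \<mu> \<and> g i = proj (Ss i) z"
          by (simp add: image_iff Bex_def)
        from bchoice[OF this] obtain y0 where y0: "\<forall>i\<in>{..<N}. y0 i \<in> set_pmf \<mu> \<and> g i = proj (Ss i) (y0 i)"
          by (elim exE)
        have y: "\<forall>i<N. y0 i \<in> set_pmf \<mu> \<and> proj (Ss i) (y0 i) = g i"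
          using y0 by simp
        define ix where "ix = (\<lambda>v. THE i. i<N \<and> v \<in> Ss i)"
        define x where "x = (\<lambda>v. if v \<in> (\<Union>i<N. Ss i) then g (ix v) v else undefined)"
        have xM: "x \<in> Mem (\<Union>i<N. Ss i)" unfolding Mem_def
          by (rule PiE_I) (simp_all add: x_def)
        have pr: "\<forall>i<N. proj (Ss i) x = g i"
        proof (intro allI impI ext)
          fix i v assume i: "i < N"
          show "proj (Ss i) x v = g i v"
          proof (cases "v \<in> Ss i")
            case True
            have "ix v = i" unfolding ix_def
            proof (rule the_equality)
              show "i < N \<and> v \<in> Ss i" using True i by simp
            next
              fix j assume j: "j < N \<and> v \<in> Ss j"
              show "j = i"
              proof (rule ccontr)
                assume "j \<noteq> i"
                then have "Ss j \<inter> Ss i = {}" using disj j i by simp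
                then show False using j True by auto
              qed
            qed
            moreover have "v \<in> (\<Union>i<N. Ss i)" using True i by blast
            ultimately show ?thesis using True by (simp add: proj_def x_def)
          next
            case False
            have "g i = proj (Ss i) (y0 i)" using y i by simp
            then show ?thesis using False by (simp add: proj_def)
          qed
        qed
        have "P x = g"
        proof (rule ext)
          fix i show "P x i = g i" using pr gdef by (cases "i<N") (simp_all add: P_def)
        qed
        have "pmf \<mu> x = (\<Prod>i<N. pmf (marginal (Ss i) \<mu>) (proj (Ss i) x))"
          using ind xM unfolding mutually_independent_def by blast
        also have "\<dots> = (\<Prod>i<N. pmf (marginal (Ss i) \<mu>) (g i))"
          using pr by (intro prod.cong) auto
        finally have "x \<in> set_pmf \<mu>" using nz by (simp add: set_pmf_iff)
        then show False using False \<open>P x = g\<close> by blast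
      qed
      then show ?thesis using pi z by (simp add: pmf_map)
    qed
  qed
qed

theorem mainTheorem15:
  fixes N :: nat and Ss :: "nat \<Rightarrow> 'v set" and \<mu> :: "('v \<Rightarrow> real) pmf"
  assumes fin: "\<And>i. i < N \<Longrightarrow> finite (Ss i)"
    and disj: "\<And>i j. i < N \<Longrightarrow> j < N \<Longrightarrow> i \<noteq> j \<Longrightarrow> Ss i \<inter> Ss j = {}"
    and supp: "set_pmf \<mu> \<subseteq> Mem (\<Union>i<N. Ss i)"
  shows "mutually_independent N Ss \<mu> \<longleftrightarrow>
    (\<forall>f :: nat \<Rightarrow> ('v \<Rightarrow> real) \<Rightarrow> real.
       (\<forall>i<N. \<forall>m\<in>Mem (Ss i). 0 \<le> f i m) \<longrightarrow>
       ((\<forall>i<N. monotone_mem (Ss i) (f i)) \<or> (\<forall>i<N. antitone_mem (Ss i) (f i))) \<longrightarrow>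
       (\<integral>\<^sup>+ x. ennreal (\<Prod>i<N. f i (proj (Ss i) x)) \<partial>measure_pmf \<mu>) =
       (\<Prod>i<N. \<integral>\<^sup>+ x. ennreal (f i (proj (Ss i) x)) \<partial>measure_pmf \<mu>))"
proof
  assume ind: "mutually_independent N Ss \<mu>"
  define P where "P = (\<lambda>x i. if i < N then proj (Ss i) x else (undefined :: 'v \<Rightarrow> real))"
  have mp: "map_pmf P \<mu> = Pi_pmf {..<N} undefined (\<lambda>i. marginal (Ss i) \<mu>)"
    using fwd[OF disj supp ind P_def] by simp
  show "\<forall>f :: nat \<Rightarrow> ('v \<Rightarrow> real) \<Rightarrow> real.
       (\<forall>i<N. \<forall>m\<in>Mem (Ss i). 0 \<le> f i m) \<longrightarrow>
       ((\<forall>i<N. monotone_mem (Ss i) (f i)) \<or> (\<forall>i<N. antitone_mem (Ss i) (f i))) \<longrightarrow>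
       (\<integral>\<^sup>+ x. ennreal (\<Prod>i<N. f i (proj (Ss i) x)) \<partial>measure_pmf \<mu>) =
       (\<Prod>i<N. \<integral>\<^sup>+ x. ennreal (f i (proj (Ss i) x)) \<partial>measure_pmf \<mu>)"
  proof (intro allI impI)
    fix f :: "nat \<Rightarrow> ('v \<Rightarrow> real) \<Rightarrow> real"
    assume nn: "\<forall>i<N. \<forall>m\<in>Mem (Ss i). 0 \<le> f i m"
    have "(\<integral>\<^sup>+ x. ennreal (\<Prod>i<N. f i (proj (Ss i) x)) \<partial>measure_pmf \<mu>)
        = (\<integral>\<^sup>+ x. (\<Prod>i\<in>{..<N}. ennreal (f i (P x i))) \<partial>measure_pmf \<mu>)"
    proof (rule nn_integral_cong)
      fix x
      have "(\<Prod>i\<in>{..<N}. ennreal (f i (P x i))) = (\<Prod>i\<in>{..<N}. ennreal (f i (proj (Ss i) x)))"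
        unfolding P_def by (rule prod.cong) auto
      also have "\<dots> = ennreal (\<Prod>i<N. f i (proj (Ss i) x))"
        using nn by (intro prod_ennreal) auto
      finally show "ennreal (\<Prod>i<N. f i (proj (Ss i) x)) = (\<Prod>i\<in>{..<N}. ennreal (f i (P x i)))" by simp
    qed
    also have "\<dots> = (\<integral>\<^sup>+ y. (\<Prod>i\<in>{..<N}. ennreal (f i (y i))) \<partial>measure_pmf (map_pmf P \<mu>))"
      by simp
    also have "\<dots> = (\<Prod>i\<in>{..<N}. \<integral>\<^sup>+ m. ennreal (f i m) \<partial>measure_pmf (marginal (Ss i) \<mu>))"
      unfolding mp by (rule nn_integral_prod_Pi_pmf) simp
    also have "\<dots> = (\<Prod>i<N. \<integral>\<^sup>+ x. ennreal (f i (proj (Ss i) x)) \<partial>measure_pmf \<mu>)"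
      unfolding marginal_def by simp
    finally show "(\<integral>\<^sup>+ x. ennreal (\<Prod>i<N. f i (proj (Ss i) x)) \<partial>measure_pmf \<mu>) =
       (\<Prod>i<N. \<integral>\<^sup>+ x. ennreal (f i (proj (Ss i) x)) \<partial>measure_pmf \<mu>)" .
  qed
next
  assume H: "\<forall>f :: nat \<Rightarrow> ('v \<Rightarrow> real) \<Rightarrow> real.
       (\<forall>i<N. \<forall>m\<in>Mem (Ss i). 0 \<le> f i m) \<longrightarrow>
       ((\<forall>i<N. monotone_mem (Ss i) (f i)) \<or> (\<forall>i<N. antitone_mem (Ss i) (f i))) \<longrightarrow>
       (\<integral>\<^sup>+ x. ennreal (\<Prod>i<N. f i (proj (Ss i) x)) \<partial>measure_pmf \<mu>) =
       (\<Prod>i<N. \<integral>\<^sup>+ x. ennreal (f i (proj (Ss i) x)) \<partial>measure_pmf \<mu>)"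
  show "mutually_independent N Ss \<mu>"
    unfolding mutually_independent_def
  proof
    fix x assume xM: "x \<in> Mem (\<Union>i<N. Ss i)"
    define A where "A = (\<lambda>i. {proj (Ss i) x})"
    have m: "measure \<mu> {y. \<forall>i<N. proj (Ss i) y \<in> A i} = (\<Prod>i<N. measure \<mu> {y. proj (Ss i) y \<in> A i})"
      by (rule sing_case[where k = N and a = "\<lambda>i. proj (Ss i) x"])
         (use up_case[OF H] in \<open>auto simp: A_def\<close>)
    let ?E = "{y. \<forall>i<N. proj (Ss i) y \<in> A i}"
    have "?E \<inter> set_pmf \<mu> \<subseteq> {x}"
    proof
      fix y assume "y \<in> ?E \<inter> set_pmf \<mu>"
      then show "y \<in> {x}" using Mem_eq[where x=y and y=x and N=N and Ss=Ss] supp xM by (auto simp: A_def)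
    qed
    have "measure \<mu> (?E - {x}) = 0"
      using \<open>?E \<inter> set_pmf \<mu> \<subseteq> {x}\<close> by (auto simp: measure_pmf_zero_iff)
    moreover have "?E \<inter> {x} = {x}" by (auto simp: A_def)
    ultimately have "measure \<mu> ?E = measure \<mu> {x}"
      using measure_pmf.finite_measure_Diff'[of ?E \<mu> "{x}"] by simp
    then have "pmf \<mu> x = (\<Prod>i<N. measure \<mu> {y. proj (Ss i) y \<in> A i})"
      using m by (simp add: measure_pmf_single)
    also have "\<dots> = (\<Prod>i<N. pmf (marginal (Ss i) \<mu>) (proj (Ss i) x))"
      unfolding marginal_def pmf_map A_def by (simp add: vimage_def)
    finally show "pmf \<mu> x = (\<Prod>i<N. pmf (marginal (Ss i) \<mu>) (proj (Ss i) x))" .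
  qed
qed

end
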